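(* Let $m,d,n\ge1$, $p,q,\lambda>0$, $g(\alpha)=\|\alpha/\lambda\|_p^q$, and let $\mathfrak{D}$ be the set of matrices $D\in\mathbb{R}^{m\times d}$ whose columns all have unit $\ell_2$-norm. For any $X=[x_1,\dots,x_n]\in\mathbb{R}^{m\times n}$ define $$F_X(D)=\frac1n\sum_{i=1}^n\inf_{\alpha\in\mathbb{R}^d}\Big(\tfrac12\|x_i-D\alpha\|_2^2+g(\alpha)\Big),\qquad L_X=\frac1n\sum_{i=1}^n\|x_i\|_2\cdot\lambda\cdot d^{(1-1/p)_+}\Big(\tfrac12\|x_i\|_2^2\Big)^{1/q}.$$ Then for any $X$ and any $D,D'\in\mathfrak{D}$, $$|F_X(D')-F_X(D)|\le L_X\,\|D'-D\|_{1\to2}.$$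
   Context: $(t)_+=\max\{t,0\}$. For a matrix $M$ with columns $m_i$, $\|M\|_{1\to2}=\max_i\|m_i\|_2$. For $0<p<1$, $\|\cdot\|_p$ is the $\ell_p$ quasi-norm. *)

theory Defs
  imports "HOL-Analysis.Analysis"
begin

definition lp_norm :: "real \<Rightarrow> real ^ 'd \<Rightarrow> real" where
  "lp_norm p a = (\<Sum>j\<in>UNIV. \<bar>a $ j\<bar> powr p) powr (1 / p)"

definition penalty :: "real \<Rightarrow> real \<Rightarrow> real \<Rightarrow> real ^ 'd \<Rightarrow> real" where
  "penalty p q lam a = (lp_norm p ((1 / lam) *\<^sub>R a)) powr q"

definition unit_col_dicts :: "(real ^ 'd ^ 'm) set" where
  "unit_col_dicts = {D. \<forall>j. norm (column j D) = 1}"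

definition norm_1_2 :: "real ^ 'd ^ 'm \<Rightarrow> real" where
  "norm_1_2 M = Max (range (\<lambda>j. norm (column j M)))"

definition F_X :: "real \<Rightarrow> real \<Rightarrow> real \<Rightarrow> real ^ 'n ^ 'm \<Rightarrow> real ^ 'd ^ 'm \<Rightarrow> real" where
  "F_X p q lam X D = (1 / real CARD('n)) *
     (\<Sum>i\<in>UNIV. (INF a. (1/2) * (norm (column i X - D *v a))\<^sup>2 + penalty p q lam a))"

definition L_X :: "real \<Rightarrow> real \<Rightarrow> real \<Rightarrow> 'd itself \<Rightarrow> real ^ 'n ^ 'm \<Rightarrow> real" where
  "L_X p q lam _ X = (1 / real CARD('n)) *
     (\<Sum>i\<in>UNIV. norm (column i X) * lam * real CARD('d) powr (max (1 - 1 / p) 0)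
        * ((1/2) * (norm (column i X))\<^sup>2) powr (1 / q))"

end

theory Submission
  imports Defs
begin

lemma powr_le_self: "0 \<le> t \<Longrightarrow> t \<le> 1 \<Longrightarrow> 1 \<le> p \<Longrightarrow> t powr p \<le> (t::real)"
  by (smt (verit, best) powr_le_one_le powr_nonneg_iff)

lemma powr_convex0:
  assumes "p \<ge> 1" shows "convex_on {0..} (\<lambda>x::real. x powr p)"
proof (rule convex_onI)
  fix t x y :: real assume t: "t > 0" "t < 1" and xy: "x \<in> {0..}" "y \<in> {0..}"
  show "((1 - t) *\<^sub>R x + t *\<^sub>R y) powr p \<le> (1 - t) * x powr p + t * y powr p"
  proof (cases "x = 0 \<or> y = 0")
    case True
    then show ?thesis
    proof
      assume x: "x = 0"
      have "(t * y) powr p = t powr p * y powr p" by (simp add: powr_mult)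
      also have "\<dots> \<le> t * y powr p"
        by (rule mult_right_mono) (use powr_le_self[of t p] t assms in auto)
      finally show ?thesis using x by simp
    next
      assume y: "y = 0"
      have "((1-t) * x) powr p = (1-t) powr p * x powr p" by (simp add: powr_mult)
      also have "\<dots> \<le> (1-t) * x powr p"
        by (rule mult_right_mono) (use powr_le_self[of "1-t" p] t assms in auto)
      finally show ?thesis using y by simp
    qed
  next
    case False
    then show ?thesis using convex_onD[OF powr_convex[OF assms], of t x y] t xy by auto
  qed
qed auto

lemma l1_ge1:
  fixes u :: "'d::finite \<Rightarrow> real"
  assumes u: "\<And>j. u j \<ge> 0" and p: "p \<ge> 1"
  shows "sum u UNIV \<le> real CARD('d) powr (1 - 1/p) * (sum (\<lambda>j. u j powr p) UNIV) powr (1/p)"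
proof -
  define d where "d = real CARD('d)"
  define S where "S = sum (\<lambda>j. u j powr p) UNIV"
  have d: "d > 0" unfolding d_def by simp
  have "(\<Sum>j\<in>UNIV. (1/d) *\<^sub>R u j) powr p \<le> (\<Sum>j\<in>UNIV. (1/d) * (u j powr p))"
    by (rule convex_on_sum[OF _ _ powr_convex0[OF p]]) (use d u in \<open>auto simp: d_def\<close>)
  hence 1: "(sum u UNIV / d) powr p \<le> S / d"
    by (simp add: S_def sum_divide_distrib[symmetric] sum_distrib_left[symmetric] divide_inverse mult.commute)
  have su: "sum u UNIV \<ge> 0" using u by (simp add: sum_nonneg)
  have "sum u UNIV / d = ((sum u UNIV / d) powr p) powr (1/p)"
    using p su d by (simp add: powr_powr powr_one)
  also have "\<dots> \<le> (S / d) powr (1/p)"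
    by (rule powr_mono2) (use 1 p in auto)
  finally have 2: "sum u UNIV / d \<le> (S / d) powr (1/p)" .
  have "sum u UNIV \<le> d * (S / d) powr (1/p)" using 2 d by (simp add: divide_le_eq mult.commute)
  also have "\<dots> = d powr (1 - 1/p) * S powr (1/p)"
    using d by (simp add: powr_divide powr_diff)
  finally show ?thesis unfolding d_def S_def .
qed

lemma l1_le1:
  fixes u :: "'d::finite \<Rightarrow> real"
  assumes u: "\<And>j. u j \<ge> 0" and p: "p > 0" "p \<le> 1"
  shows "sum u UNIV \<le> (sum (\<lambda>j. u j powr p) UNIV) powr (1/p)"
proof -
  define S where "S = sum (\<lambda>j. u j powr p) UNIV"
  have S0: "S \<ge> 0" unfolding S_def by (simp add: sum_nonneg)
  have uj: "u j \<le> S powr (1/p)" for j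
  proof -
    have "u j = (u j powr p) powr (1/p)" using u[of j] p by (simp add: powr_powr)
    also have "\<dots> \<le> S powr (1/p)"
      by (rule powr_mono2) (use p in \<open>auto simp: S_def intro!: member_le_sum\<close>)
    finally show ?thesis .
  qed
  have "u j \<le> u j powr p * (S powr (1/p)) powr (1 - p)" for j
  proof -
    have "u j = u j powr (p + (1 - p))" using u[of j] by simp
    also have "\<dots> = u j powr p * u j powr (1 - p)" by (rule powr_add)
    also have "\<dots> \<le> u j powr p * (S powr (1/p)) powr (1 - p)"
      by (rule mult_left_mono, rule powr_mono2) (use p u uj in auto)
    finally show ?thesis .
  qed
  hence "sum u UNIV \<le> (\<Sum>j\<in>UNIV. u j powr p * (S powr (1/p)) powr (1 - p))"
    by (rule sum_mono)
  also have "\<dots> = S * (S powr (1/p)) powr (1 - p)" by (simp add: S_def sum_distrib_right)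
  also have "\<dots> = S powr 1 * S powr ((1 - p)/p)" using S0 by (simp add: powr_powr)
  also have "\<dots> = S powr (1 + (1 - p)/p)" by (rule powr_add[symmetric])
  also have "1 + (1 - p)/p = 1/p" using p by (simp add: field_simps)
  finally show ?thesis unfolding S_def .
qed

lemma l1_bound:
  fixes a :: "real ^ 'd"
  assumes p: "p > 0"
  shows "(\<Sum>j\<in>UNIV. \<bar>a $ j\<bar>) \<le> real CARD('d) powr (max (1 - 1/p) 0) * lp_norm p a"
proof (cases "p \<ge> 1")
  case True
  then have "max (1 - 1/p) 0 = 1 - 1/p" by (simp add: field_simps)
  then show ?thesis using l1_ge1[of "\<lambda>j. \<bar>a $ j\<bar>" p] True by (simp add: lp_norm_def)
next
  case False
  then have "max (1 - 1/p) 0 = 0" using p by (simp add: field_simps)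
  then show ?thesis using l1_le1[of "\<lambda>j. \<bar>a $ j\<bar>" p] False p by (simp add: lp_norm_def)
qed

lemma lp_scale:
  fixes a :: "real ^ 'd"
  assumes p: "p > 0" and lam: "lam > 0"
  shows "lp_norm p ((1/lam) *\<^sub>R a) = lp_norm p a / lam"
proof -
  have "(\<Sum>j\<in>UNIV. \<bar>((1/lam) *\<^sub>R a) $ j\<bar> powr p) = (\<Sum>j\<in>UNIV. \<bar>a $ j\<bar> powr p) / lam powr p"
    using lam by (simp add: sum_divide_distrib powr_divide abs_mult)
  then have "lp_norm p ((1/lam) *\<^sub>R a) = ((\<Sum>j\<in>UNIV. \<bar>a $ j\<bar> powr p) / lam powr p) powr (1/p)"
    by (simp add: lp_norm_def)
  also have "\<dots> = lp_norm p a / lam"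
    using p lam by (simp add: lp_norm_def powr_divide powr_powr)
  finally show ?thesis .
qed

lemma pen_bound:
  fixes a :: "real ^ 'd"
  assumes p: "p > 0" and q: "q > 0" and lam: "lam > 0"
    and pen: "penalty p q lam a \<le> K"
  shows "(\<Sum>j\<in>UNIV. \<bar>a $ j\<bar>) \<le> lam * real CARD('d) powr (max (1 - 1/p) 0) * K powr (1/q)"
proof -
  define l where "l = lp_norm p ((1/lam) *\<^sub>R a)"
  have l0: "l \<ge> 0" unfolding l_def lp_norm_def by simp
  have "l = (l powr q) powr (1/q)" using q l0 by (simp add: powr_powr)
  also have "\<dots> \<le> K powr (1/q)"
    by (rule powr_mono2) (use pen q in \<open>auto simp: penalty_def l_def\<close>)
  finally have lK: "l \<le> K powr (1/q)" .
  have "lp_norm p a = lam * l" using lp_scale[OF p lam, of a] lam by (simp add: l_def)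
  also have "\<dots> \<le> lam * K powr (1/q)" using lK lam by simp
  finally have "lp_norm p a \<le> lam * K powr (1/q)" .
  then have "real CARD('d) powr (max (1 - 1/p) 0) * lp_norm p a
      \<le> real CARD('d) powr (max (1 - 1/p) 0) * (lam * K powr (1/q))"
    by (rule mult_left_mono) simp
  from order_trans[OF l1_bound[OF p, of a] this] show ?thesis by (simp add: mult_ac)
qed

lemma mv_diff:
  fixes E E' :: "real ^ 'd ^ 'm"
  assumes B: "\<And>j. norm (column j E' - column j E) \<le> B"
  shows "norm (E' *v a - E *v a) \<le> (\<Sum>j\<in>UNIV. \<bar>a $ j\<bar>) * B"
proof -
  have "E' *v a - E *v a = (\<Sum>j\<in>UNIV. a $ j *\<^sub>R (column j E' - column j E))"
    by (simp add: matrix_mult_sum scalar_mult_eq_scaleR sum_subtractf[symmetric] scaleR_diff_right)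
  then have "norm (E' *v a - E *v a) \<le> (\<Sum>j\<in>UNIV. norm (a $ j *\<^sub>R (column j E' - column j E)))"
    by (simp only: norm_sum)
  also have "\<dots> \<le> (\<Sum>j\<in>UNIV. \<bar>a $ j\<bar> * B)"
    by (rule sum_mono) (simp add: B mult_left_mono)
  finally show ?thesis by (simp add: sum_distrib_right)
qed

definition obj :: "real \<Rightarrow> real \<Rightarrow> real \<Rightarrow> real ^ 'd ^ 'm \<Rightarrow> real ^ 'm \<Rightarrow> real ^ 'd \<Rightarrow> real" where
  "obj p q lam E x a = (1/2) * (norm (x - E *v a))\<^sup>2 + penalty p q lam a"

definition fv :: "real \<Rightarrow> real \<Rightarrow> real \<Rightarrow> real ^ 'd ^ 'm \<Rightarrow> real ^ 'm \<Rightarrow> real" where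
  "fv p q lam E x = (INF a. obj p q lam E x a)"

lemma pen_ge0: "penalty p q lam a \<ge> 0" by (simp add: penalty_def)

lemma obj_ge0: "obj p q lam E x a \<ge> 0" by (simp add: obj_def pen_ge0)

lemma obj_bdd: "bdd_below (range (obj p q lam E x))"
  by (rule bdd_belowI[of _ 0]) (auto simp: obj_ge0)

lemma fv_le: "fv p q lam E x \<le> obj p q lam E x a"
  unfolding fv_def by (rule cINF_lower[OF obj_bdd]) simp

lemma obj_zero: "obj p q lam E x 0 = (1/2) * (norm x)\<^sup>2"
  by (simp add: obj_def penalty_def lp_norm_def)

lemma near_opt:
  assumes e: "e > 0"
  shows "\<exists>a. obj p q lam E x a \<le> fv p q lam E x + e \<and> obj p q lam E x a \<le> (1/2) * (norm x)\<^sup>2"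
proof (cases "fv p q lam E x = (1/2) * (norm x)\<^sup>2")
  case True
  then show ?thesis using e by (intro exI[of _ 0]) (simp add: obj_zero)
next
  case False
  have "fv p q lam E x \<le> (1/2) * (norm x)\<^sup>2" using fv_le[of p q lam E x 0] by (simp add: obj_zero)
  with False have lt: "fv p q lam E x < (1/2) * (norm x)\<^sup>2" by simp
  define e' where "e' = min e ((1/2) * (norm x)\<^sup>2 - fv p q lam E x)"
  have "e' > 0" using e lt by (simp add: e'_def)
  then have "(INF a. obj p q lam E x a) < fv p q lam E x + e'" by (simp add: fv_def)
  then have "\<exists>a. obj p q lam E x a < fv p q lam E x + e'"
    using cINF_less_iff[of UNIV "obj p q lam E x" "fv p q lam E x + e'"] obj_bdd[of p q lam E x] by simp
  then obtain a where "obj p q lam E x a < fv p q lam E x + e'" by blast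
  then show ?thesis by (intro exI[of _ a]) (auto simp: e'_def)
qed

lemma step:
  fixes E E' :: "real ^ 'd ^ 'm" and x :: "real ^ 'm"
  assumes p: "p > 0" and q: "q > 0" and lam: "lam > 0"
    and B: "\<And>j. norm (column j E' - column j E) \<le> B" and B0: "B \<ge> 0"
  defines "A \<equiv> lam * real CARD('d) powr (max (1 - 1/p) 0) * ((1/2) * (norm x)\<^sup>2) powr (1/q)"
  shows "fv p q lam E' x \<le> fv p q lam E x + norm x * (A * B) + (A * B)\<^sup>2 / 2"
proof (rule field_le_epsilon)
  fix e :: real assume e: "e > 0"
  obtain a where a1: "obj p q lam E x a \<le> fv p q lam E x + e"
    and a2: "obj p q lam E x a \<le> (1/2) * (norm x)\<^sup>2"
    using near_opt[OF e] by blast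
  have "penalty p q lam a \<le> (1/2) * (norm x)\<^sup>2"
    using a2 zero_le_power2[of "norm (x - E *v a)"] unfolding obj_def by linarith
  then have sa: "(\<Sum>j\<in>UNIV. \<bar>a $ j\<bar>) \<le> A" unfolding A_def by (rule pen_bound[OF p q lam])
  define r where "r = x - E *v a"
  define dl where "dl = E *v a - E' *v a"
  have "(norm r)\<^sup>2 \<le> (norm x)\<^sup>2" using a2 pen_ge0[of p q lam a] unfolding obj_def r_def by linarith
  then have rx: "norm r \<le> norm x" by (rule power2_le_imp_le) simp
  have "norm dl \<le> (\<Sum>j\<in>UNIV. \<bar>a $ j\<bar>) * B"
    using mv_diff[of E E' B a] B by (simp add: dl_def norm_minus_commute)
  also have "\<dots> \<le> A * B" using sa B0 by (simp add: mult_right_mono)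
  finally have dA: "norm dl \<le> A * B" .
  have xr: "x - E' *v a = r + dl" by (simp add: r_def dl_def)
  have "norm (r + dl) \<le> norm r + norm dl" by (rule norm_triangle_ineq)
  then have "(norm (r + dl))\<^sup>2 \<le> (norm r + norm dl)\<^sup>2" by (simp add: power_mono)
  also have "\<dots> = (norm r)\<^sup>2 + 2 * norm r * norm dl + (norm dl)\<^sup>2" by (simp add: power2_sum)
  also have "\<dots> \<le> (norm r)\<^sup>2 + 2 * norm x * (A * B) + (A * B)\<^sup>2"
  proof -
    have "norm r * norm dl \<le> norm x * (A * B)" using rx dA by (simp add: mult_mono)
    moreover have "(norm dl)\<^sup>2 \<le> (A * B)\<^sup>2" using dA by (simp add: power_mono)
    ultimately show ?thesis by simp
  qed
  finally have sq: "(norm (x - E' *v a))\<^sup>2 \<le> (norm r)\<^sup>2 + 2 * norm x * (A * B) + (A * B)\<^sup>2"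
    by (simp add: xr)
  have "fv p q lam E' x \<le> obj p q lam E' x a" by (rule fv_le)
  also have "\<dots> \<le> obj p q lam E x a + norm x * (A * B) + (A * B)\<^sup>2 / 2"
    using sq by (simp add: obj_def r_def)
  also have "\<dots> \<le> fv p q lam E x + norm x * (A * B) + (A * B)\<^sup>2 / 2 + e" using a1 by simp
  finally show "fv p q lam E' x \<le> fv p q lam E x + norm x * (A * B) + (A * B)\<^sup>2 / 2 + e" .
qed

lemma chain:
  fixes D D' :: "real ^ 'd ^ 'm" and x :: "real ^ 'm"
  assumes p: "p > 0" and q: "q > 0" and lam: "lam > 0"
    and C: "\<And>j. norm (column j (D' - D)) \<le> C" and C0: "C \<ge> 0" and N: "N > 0"
  defines "A \<equiv> lam * real CARD('d) powr (max (1 - 1/p) 0) * ((1/2) * (norm x)\<^sup>2) powr (1/q)"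
  shows "fv p q lam D' x \<le> fv p q lam D x + norm x * (A * C) + (A * C)\<^sup>2 / (2 * real N)"
proof -
  define Dk where "Dk k = D + (real k / real N) *\<^sub>R (D' - D)" for k
  define c where "c = C / real N"
  have c0: "c \<ge> 0" using C0 by (simp add: c_def)
  have cc: "norm (column j (Dk (Suc k)) - column j (Dk k)) \<le> c" for j k
  proof -
    have "column j (Dk (Suc k)) - column j (Dk k) = (1 / real N) *\<^sub>R column j (D' - D)"
      using N by (simp add: Dk_def column_def vec_eq_iff field_simps)
    then show ?thesis using C[of j] N by (simp add: c_def divide_right_mono)
  qed
  have ind: "fv p q lam (Dk k) x \<le> fv p q lam D x + real k * (norm x * (A * c) + (A * c)\<^sup>2 / 2)" for k
  proof (induction k)
    case 0
    then show ?case by (simp add: Dk_def)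
  next
    case (Suc k)
    have "fv p q lam (Dk (Suc k)) x \<le> fv p q lam (Dk k) x + norm x * (A * c) + (A * c)\<^sup>2 / 2"
      unfolding A_def by (rule step[OF p q lam cc c0])
    moreover have "real (Suc k) * (norm x * (A * c) + (A * c)\<^sup>2 / 2)
        = real k * (norm x * (A * c) + (A * c)\<^sup>2 / 2) + (norm x * (A * c) + (A * c)\<^sup>2 / 2)"
      by (simp add: algebra_simps)
    ultimately show ?case using Suc.IH by linarith
  qed
  have "Dk N = D'" using N by (simp add: Dk_def)
  with ind[of N] have "fv p q lam D' x \<le> fv p q lam D x + real N * (norm x * (A * c) + (A * c)\<^sup>2 / 2)"
    by simp
  also have "real N * (norm x * (A * c) + (A * c)\<^sup>2 / 2) = norm x * (A * C) + (A * C)\<^sup>2 / (2 * real N)"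
    using N by (simp add: c_def field_simps power2_eq_square)
  finally show ?thesis by (simp add: add.assoc)
qed

lemma lim_aux:
  fixes y z b :: real
  assumes "\<And>N::nat. N > 0 \<Longrightarrow> y \<le> z + b / real N"
  shows "y \<le> z"
proof (rule ccontr)
  assume "\<not> y \<le> z"
  then have d: "y - z > 0" by simp
  obtain n :: nat where n: "\<bar>b\<bar> / (y - z) < real n" using reals_Archimedean2 by blast
  have "\<bar>b\<bar> < (y - z) * real (Suc n)" using n d by (simp add: divide_less_eq algebra_simps)
  then have "\<bar>b\<bar> / real (Suc n) < y - z" by (simp add: divide_less_eq mult.commute)
  moreover have "b / real (Suc n) \<le> \<bar>b\<bar> / real (Suc n)" by (simp add: divide_right_mono)
  moreover have "y \<le> z + b / real (Suc n)" using assms[of "Suc n"] by simp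
  ultimately show False by linarith
qed

theorem lemma1:
  fixes p q lam :: real
    and X :: "real ^ 'n ^ 'm"
    and D D' :: "real ^ 'd ^ 'm"
  assumes "p > 0" and "q > 0" and "lam > 0"
    and "D \<in> unit_col_dicts" and "D' \<in> unit_col_dicts"
  shows "\<bar>F_X p q lam X D' - F_X p q lam X D\<bar>
           \<le> L_X p q lam TYPE('d) X * norm_1_2 (D' - D)"
proof -
  note p = assms(1) and q = assms(2) and lam = assms(3)
  define C where "C = norm_1_2 (D' - D)"
  have C1: "norm (column j (D' - D)) \<le> C" for j
    unfolding C_def norm_1_2_def by (rule Max_ge) auto
  have C2: "norm (column j (D - D')) \<le> C" for j
  proof -
    have "column j (D - D') = - column j (D' - D)" by (simp add: column_def vec_eq_iff)
    then show ?thesis using C1[of j] by simp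
  qed
  have C0: "C \<ge> 0" using C1 norm_ge_zero order_trans by blast
  define A where "A x = lam * real CARD('d) powr (max (1 - 1/p) 0) * ((1/2) * (norm x)\<^sup>2) powr (1/q)"
    for x :: "real ^ 'm"
  have each: "\<bar>fv p q lam D' x - fv p q lam D x\<bar> \<le> norm x * (A x * C)" for x
  proof -
    have "fv p q lam D' x \<le> fv p q lam D x + norm x * (A x * C)"
      by (rule lim_aux[where b = "(A x * C)\<^sup>2 / 2"])
        (use chain[OF p q lam C1 C0, of _ x] in \<open>simp add: A_def\<close>)
    moreover have "fv p q lam D x \<le> fv p q lam D' x + norm x * (A x * C)"
      by (rule lim_aux[where b = "(A x * C)\<^sup>2 / 2"])
        (use chain[OF p q lam C2 C0, of _ x] in \<open>simp add: A_def\<close>)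
    ultimately show ?thesis by linarith
  qed
  have F: "F_X p q lam X E = (1 / real CARD('n)) * (\<Sum>i\<in>UNIV. fv p q lam E (column i X))"
    for E :: "real ^ 'd ^ 'm"
    by (simp add: F_X_def fv_def obj_def)
  have "\<bar>F_X p q lam X D' - F_X p q lam X D\<bar>
      = (1 / real CARD('n)) * \<bar>\<Sum>i\<in>UNIV. fv p q lam D' (column i X) - fv p q lam D (column i X)\<bar>"
    by (simp add: F sum_subtractf diff_divide_distrib[symmetric] abs_divide)
  also have "\<dots> \<le> (1 / real CARD('n)) * (\<Sum>i\<in>UNIV. \<bar>fv p q lam D' (column i X) - fv p q lam D (column i X)\<bar>)"
    by (rule mult_left_mono) (simp_all add: sum_abs)
  also have "\<dots> \<le> (1 / real CARD('n)) * (\<Sum>i\<in>UNIV. norm (column i X) * (A (column i X) * C))"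
    by (rule mult_left_mono) (simp_all add: sum_mono each)
  also have "\<dots> = L_X p q lam TYPE('d) X * norm_1_2 (D' - D)"
    by (simp add: L_X_def A_def C_def sum_distrib_left sum_distrib_right mult_ac)
  finally show ?thesis .
qed

end
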